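(* Let $S$ be a lattice of finite length and let $(L_x)_{x\in S}$, $(\varphi_{yx})_{x\le y}$ be an $S$-connected system with the $L_x$ pairwise disjoint. On $U=\bigcup_{x\in S}L_x$ define $a\sim b$ (for $a\in L_x$, $b\in L_y$) iff there is $z\in S$ with $z\ge x\vee y$, $a\in\operatorname{dom}\varphi_{zx}$, $b\in\operatorname{dom}\varphi_{zy}$ and $\varphi_{zx}(a)=\varphi_{zy}(b)$. Then $\sim$ is an equivalence relation on $U$; letting $\pi:U\to U/{\sim}$ be the canonical projection, $\pi$ is injective on each $L_x$; and if $L^\pi_x:=\pi(L_x)$ is given the lattice structure making $\pi|_{L_x}:L_x\to L^\pi_x$ an isomorphism, then $(L^\pi_x)_{x\in S}$ is an $S$-glued system. Moreover, this $S$-glued system is monotone if and only if for all $x\prec y$ in $S$, $\operatorname{im}\varphi_{yx}\ne L_y$ and $\operatorname{dom}\varphi_{yx}\ne L_x$.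
   Context: Let $S$ be a lattice of finite length (every chain in $S$ is finite), with order $\le$, join $\vee$ and meet $\wedge$; $x\prec y$ means that $y$ covers $x$. A \emph{partial bijection} $\varphi$ from a set $A$ to a set $B$ is a bijection from a subset $\operatorname{dom}\varphi\subseteq A$ onto a subset $\operatorname{im}\varphi\subseteq B$ (possibly empty); composites $\psi\circ\varphi$ of partial maps are defined at $a$ iff $a\in\operatorname{dom}\varphi$ and $\varphi(a)\in\operatorname{dom}\psi$. An \emph{$S$-connected system} consists of lattices $L_x$ ($x\in S$) of finite length and partial bijections $\varphi_{yx}$ from $L_x$ to $L_y$ for all $x\le y$ in $S$ such that for all $x,y\in S$: (17) if $\varphi_{yx}\ne\emptyset$ then $\operatorname{dom}\varphi_{yx}$ is a filter of $L_x$, $\operatorname{im}\varphi_{yx}$ is an ideal of $L_y$ and $\varphi_{yx}$ is a lattice isomorphism between them; $\varphi_{xx}=\mathrm{id}_{L_x}$; (18) if $x\prec y$ then $\varphi_{yx}\ne\emptyset$; (19) for $x\le z\le y$: $\varphi_{yx}=\varphi_{yz}\circ\varphi_{zx}$; (20) $\operatorname{im}\varphi_{(x\vee y)x}\cap\operatorname{im}\varphi_{(x\vee y)y}\subseteq\operatorname{im}\varphi_{(x\vee y)(x\wedge y)}$; (20$^\delta$) $\operatorname{dom}\varphi_{x(x\wedge y)}\cap\operatorname{dom}\varphi_{y(x\wedge y)}\subseteq\operatorname{dom}\varphi_{(x\vee y)(x\wedge y)}$. An \emph{$S$-glued system} is a family $(L_x,\le_x)_{x\in S}$ of lattices of finite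 length (with least element $0_x$, greatest element $1_x$), whose underlying sets may overlap, such that for all $x,y\in S$: (1) if $x\le y$ and $L_x\cap L_y\ne\emptyset$, then $L_x\cap L_y$ is a filter of $L_x$ and an ideal of $L_y$; (2) in the situation of (1), for all $a,b\in L_x\cap L_y$: $a\le_x b$ iff $a\le_y b$; (3) if $x\prec y$ then $L_x\cap L_y\ne\emptyset$; (4) $L_x\cap L_y\subseteq L_{x\wedge y}\cap L_{x\vee y}$. The system is \emph{monotone} if for all $x\prec y$ in $S$ both $L_y\not\subseteq L_x$ and $L_x\not\subseteq L_y$. *)

theory Defs
  imports Main
begin

definition is_lub :: "'a set \<Rightarrow> ('a \<Rightarrow> 'a \<Rightarrow> bool) \<Rightarrow> 'a \<Rightarrow> 'a \<Rightarrow> 'a \<Rightarrow> bool" where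
  "is_lub A le a b c \<longleftrightarrow> c \<in> A \<and> le a c \<and> le b c \<and> (\<forall>d\<in>A. le a d \<and> le b d \<longrightarrow> le c d)"

definition is_glb :: "'a set \<Rightarrow> ('a \<Rightarrow> 'a \<Rightarrow> bool) \<Rightarrow> 'a \<Rightarrow> 'a \<Rightarrow> 'a \<Rightarrow> bool" where
  "is_glb A le a b c \<longleftrightarrow> c \<in> A \<and> le c a \<and> le c b \<and> (\<forall>d\<in>A. le d a \<and> le d b \<longrightarrow> le d c)"

definition lattice_on :: "'a set \<Rightarrow> ('a \<Rightarrow> 'a \<Rightarrow> bool) \<Rightarrow> bool" where
  "lattice_on A le \<longleftrightarrow> A \<noteq> {}
     \<and> (\<forall>a\<in>A. le a a)
     \<and> (\<forall>a\<in>A. \<forall>b\<in>A. le a b \<and> le b a \<longrightarrow> a = b)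
     \<and> (\<forall>a\<in>A. \<forall>b\<in>A. \<forall>c\<in>A. le a b \<and> le b c \<longrightarrow> le a c)
     \<and> (\<forall>a\<in>A. \<forall>b\<in>A. \<exists>c. is_lub A le a b c)
     \<and> (\<forall>a\<in>A. \<forall>b\<in>A. \<exists>c. is_glb A le a b c)"

definition fin_length_lattice :: "'a set \<Rightarrow> ('a \<Rightarrow> 'a \<Rightarrow> bool) \<Rightarrow> bool" where
  "fin_length_lattice A le \<longleftrightarrow> lattice_on A le
     \<and> (\<forall>C. C \<subseteq> A \<and> Complete_Partial_Order.chain le C \<longrightarrow> finite C)"

definition lfilter :: "'a set \<Rightarrow> ('a \<Rightarrow> 'a \<Rightarrow> bool) \<Rightarrow> 'a set \<Rightarrow> bool" where
  "lfilter A le F \<longleftrightarrow> F \<subseteq> A \<and> F \<noteq> {}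
     \<and> (\<forall>a\<in>F. \<forall>b\<in>A. le a b \<longrightarrow> b \<in> F)
     \<and> (\<forall>a\<in>F. \<forall>b\<in>F. \<forall>c. is_glb A le a b c \<longrightarrow> c \<in> F)"

definition lideal :: "'a set \<Rightarrow> ('a \<Rightarrow> 'a \<Rightarrow> bool) \<Rightarrow> 'a set \<Rightarrow> bool" where
  "lideal A le I \<longleftrightarrow> I \<subseteq> A \<and> I \<noteq> {}
     \<and> (\<forall>a\<in>I. \<forall>b\<in>A. le b a \<longrightarrow> b \<in> I)
     \<and> (\<forall>a\<in>I. \<forall>b\<in>I. \<forall>c. is_lub A le a b c \<longrightarrow> c \<in> I)"

definition lattice_iso_on :: "'a set \<Rightarrow> ('a \<Rightarrow> 'a \<Rightarrow> bool) \<Rightarrow> 'b set \<Rightarrow> ('b \<Rightarrow> 'b \<Rightarrow> bool)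
    \<Rightarrow> 'a set \<Rightarrow> 'b set \<Rightarrow> ('a \<Rightarrow> 'b) \<Rightarrow> bool" where
  "lattice_iso_on A leA B leB D R f \<longleftrightarrow> bij_betw f D R
     \<and> (\<forall>a\<in>D. \<forall>b\<in>D. \<forall>c\<in>D. is_lub A leA a b c \<longrightarrow> is_lub B leB (f a) (f b) (f c))
     \<and> (\<forall>a\<in>D. \<forall>b\<in>D. \<forall>c\<in>D. is_glb A leA a b c \<longrightarrow> is_glb B leB (f a) (f b) (f c))"

definition covers :: "'s::order \<Rightarrow> 's \<Rightarrow> bool" (infix "\<prec>" 50) where
  "x \<prec> y \<longleftrightarrow> x < y \<and> \<not> (\<exists>z. x < z \<and> z < y)"

definition finite_length_type :: "'s::lattice itself \<Rightarrow> bool" where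
  "finite_length_type _ \<longleftrightarrow> (\<forall>C::'s set. Complete_Partial_Order.chain (\<le>) C \<longrightarrow> finite C)"

text \<open>Partial bijections are maps partial maps; \<open>\<phi> y x\<close> stands for
  \<open>\<phi>_yx\<close>; composition is \<open>\<circ>\<^sub>m\<close>.\<close>
definition connected_system :: "('s::lattice \<Rightarrow> 'a set) \<Rightarrow> ('s \<Rightarrow> 'a \<Rightarrow> 'a \<Rightarrow> bool)
    \<Rightarrow> ('s \<Rightarrow> 's \<Rightarrow> 'a \<rightharpoonup> 'a) \<Rightarrow> bool" where
  "connected_system L le \<phi> \<longleftrightarrow>
     (\<forall>x. fin_length_lattice (L x) (le x))
   \<and> (\<forall>x y. x \<le> y \<longrightarrow> dom (\<phi> y x) \<subseteq> L x \<and> ran (\<phi> y x) \<subseteq> L y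
                      \<and> inj_on (\<phi> y x) (dom (\<phi> y x)))
   \<and> (\<forall>x y. x \<le> y \<and> dom (\<phi> y x) \<noteq> {} \<longrightarrow>
        lfilter (L x) (le x) (dom (\<phi> y x)) \<and> lideal (L y) (le y) (ran (\<phi> y x))
        \<and> lattice_iso_on (L x) (le x) (L y) (le y) (dom (\<phi> y x)) (ran (\<phi> y x))
             (\<lambda>a. the (\<phi> y x a)))
   \<and> (\<forall>x a. \<phi> x x a = (if a \<in> L x then Some a else None))
   \<and> (\<forall>x y. x \<prec> y \<longrightarrow> dom (\<phi> y x) \<noteq> {})
   \<and> (\<forall>x y z. x \<le> z \<and> z \<le> y \<longrightarrow> \<phi> y x = \<phi> y z \<circ>\<^sub>m \<phi> z x)
   \<and> (\<forall>x y. ran (\<phi> (sup x y) x) \<inter> ran (\<phi> (sup x y) y) \<subseteq> ran (\<phi> (sup x y) (inf x y)))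
   \<and> (\<forall>x y. dom (\<phi> x (inf x y)) \<inter> dom (\<phi> y (inf x y)) \<subseteq> dom (\<phi> (sup x y) (inf x y)))"

definition glued_system :: "('s::lattice \<Rightarrow> 'b set) \<Rightarrow> ('s \<Rightarrow> 'b \<Rightarrow> 'b \<Rightarrow> bool) \<Rightarrow> bool" where
  "glued_system M le \<longleftrightarrow>
     (\<forall>x. fin_length_lattice (M x) (le x))
   \<and> (\<forall>x y. x \<le> y \<and> M x \<inter> M y \<noteq> {} \<longrightarrow>
        lfilter (M x) (le x) (M x \<inter> M y) \<and> lideal (M y) (le y) (M x \<inter> M y))
   \<and> (\<forall>x y. x \<le> y \<and> M x \<inter> M y \<noteq> {} \<longrightarrow>
        (\<forall>a\<in>M x \<inter> M y. \<forall>b\<in>M x \<inter> M y. le x a b \<longleftrightarrow> le y a b))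
   \<and> (\<forall>x y. x \<prec> y \<longrightarrow> M x \<inter> M y \<noteq> {})
   \<and> (\<forall>x y. M x \<inter> M y \<subseteq> M (inf x y) \<inter> M (sup x y))"

definition monotone_glued :: "('s::lattice \<Rightarrow> 'b set) \<Rightarrow> bool" where
  "monotone_glued M \<longleftrightarrow> (\<forall>x y. x \<prec> y \<longrightarrow> \<not> M y \<subseteq> M x \<and> \<not> M x \<subseteq> M y)"

definition simrel :: "('s::lattice \<Rightarrow> 'a set) \<Rightarrow> ('s \<Rightarrow> 's \<Rightarrow> 'a \<rightharpoonup> 'a) \<Rightarrow> ('a \<times> 'a) set" where
  "simrel L \<phi> = {(a, b). \<exists>x y. a \<in> L x \<and> b \<in> L y \<and>
      (\<exists>z. sup x y \<le> z \<and> a \<in> dom (\<phi> z x) \<and> b \<in> dom (\<phi> z y) \<and> \<phi> z x a = \<phi> z y b)}"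

definition proj :: "('a \<times> 'a) set \<Rightarrow> 'a \<Rightarrow> 'a set" where
  "proj r a = r `` {a}"

definition Lpi :: "('s::lattice \<Rightarrow> 'a set) \<Rightarrow> ('s \<Rightarrow> 's \<Rightarrow> 'a \<rightharpoonup> 'a) \<Rightarrow> 's \<Rightarrow> 'a set set" where
  "Lpi L \<phi> x = proj (simrel L \<phi>) ` L x"

definition lepi :: "('s::lattice \<Rightarrow> 'a set) \<Rightarrow> ('s \<Rightarrow> 'a \<Rightarrow> 'a \<Rightarrow> bool) \<Rightarrow> ('s \<Rightarrow> 's \<Rightarrow> 'a \<rightharpoonup> 'a)
    \<Rightarrow> 's \<Rightarrow> 'a set \<Rightarrow> 'a set \<Rightarrow> bool" where
  "lepi L le \<phi> x P Q \<longleftrightarrow> (\<exists>a\<in>L x. \<exists>b\<in>L x.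
      P = proj (simrel L \<phi>) a \<and> Q = proj (simrel L \<phi>) b \<and> le x a b)"

end

theory Submission
  imports Defs
begin


definition oiso :: "'a set \<Rightarrow> ('a \<Rightarrow> 'a \<Rightarrow> bool) \<Rightarrow> 'b set \<Rightarrow> ('b \<Rightarrow> 'b \<Rightarrow> bool) \<Rightarrow> ('a \<Rightarrow> 'b) \<Rightarrow> bool" where
  "oiso A le B leB f \<longleftrightarrow> bij_betw f A B \<and> (\<forall>a\<in>A. \<forall>b\<in>A. leB (f a) (f b) \<longleftrightarrow> le a b)"

lemma oiso_lub:
  assumes "oiso A le B leB f" "a\<in>A" "b\<in>A" "c\<in>A"
  shows "is_lub B leB (f a) (f b) (f c) \<longleftrightarrow> is_lub A le a b c"
proof -
  have B: "B = f ` A" and ord: "\<forall>a\<in>A. \<forall>b\<in>A. leB (f a) (f b) \<longleftrightarrow> le a b"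
    using assms(1) unfolding oiso_def bij_betw_def by auto
  show ?thesis unfolding is_lub_def B using assms(2-4) ord by auto
qed

lemma oiso_glb:
  assumes "oiso A le B leB f" "a\<in>A" "b\<in>A" "c\<in>A"
  shows "is_glb B leB (f a) (f b) (f c) \<longleftrightarrow> is_glb A le a b c"
proof -
  have B: "B = f ` A" and ord: "\<forall>a\<in>A. \<forall>b\<in>A. leB (f a) (f b) \<longleftrightarrow> le a b"
    using assms(1) unfolding oiso_def bij_betw_def by auto
  show ?thesis unfolding is_glb_def B using assms(2-4) ord by auto
qed

lemma oiso_lattice:
  assumes "oiso A le B leB f" "lattice_on A le"
  shows "lattice_on B leB"
proof -
  have B: "B = f ` A" and ord: "\<forall>a\<in>A. \<forall>b\<in>A. leB (f a) (f b) \<longleftrightarrow> le a b"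
   and inj: "inj_on f A"
    using assms(1) unfolding oiso_def bij_betw_def by auto
  have L: "A \<noteq> {}" "\<forall>a\<in>A. le a a" "\<forall>a\<in>A. \<forall>b\<in>A. le a b \<and> le b a \<longrightarrow> a = b"
     "\<forall>a\<in>A. \<forall>b\<in>A. \<forall>c\<in>A. le a b \<and> le b c \<longrightarrow> le a c"
     "\<forall>a\<in>A. \<forall>b\<in>A. \<exists>c. is_lub A le a b c" "\<forall>a\<in>A. \<forall>b\<in>A. \<exists>c. is_glb A le a b c"
    apply (insert assms(2)[unfolded lattice_on_def])
    apply (elim conjE; assumption)+
    done
  have lub: "\<exists>c. is_lub B leB P Q c" if PQ: "P\<in>B" "Q\<in>B" for P Q
  proof -
    obtain a b where ab: "a\<in>A" "b\<in>A" "P = f a" "Q = f b" using PQ B by auto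
    obtain c where c: "is_lub A le a b c" using L(5) ab by blast
    then have "c \<in> A" unfolding is_lub_def by auto
    then show ?thesis using oiso_lub[OF assms(1) ab(1,2)] c ab by blast
  qed
  have glb: "\<exists>c. is_glb B leB P Q c" if PQ: "P\<in>B" "Q\<in>B" for P Q
  proof -
    obtain a b where ab: "a\<in>A" "b\<in>A" "P = f a" "Q = f b" using PQ B by auto
    obtain c where c: "is_glb A le a b c" using L(6) ab by blast
    then have "c \<in> A" unfolding is_glb_def by auto
    then show ?thesis using oiso_glb[OF assms(1) ab(1,2)] c ab by blast
  qed
  have antis: "\<forall>a\<in>B. \<forall>b\<in>B. leB a b \<and> leB b a \<longrightarrow> a = b"
  proof (intro ballI impI)
    fix P Q assume "P \<in> B" "Q \<in> B" "leB P Q \<and> leB Q P"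
    then obtain a b where "a\<in>A" "b\<in>A" "P = f a" "Q = f b" "leB (f a) (f b)" "leB (f b) (f a)"
      using B by auto
    then show "P = Q" using L(3) ord by metis
  qed
  have trans: "\<forall>a\<in>B. \<forall>b\<in>B. \<forall>c\<in>B. leB a b \<and> leB b c \<longrightarrow> leB a c"
  proof (intro ballI impI)
    fix P Q T assume "P \<in> B" "Q \<in> B" "T \<in> B" "leB P Q \<and> leB Q T"
    then obtain a b c where "a\<in>A" "b\<in>A" "c\<in>A" "P = f a" "Q = f b" "T = f c"
       "leB (f a) (f b)" "leB (f b) (f c)"
      using B by auto
    then show "leB P T" using L(4) ord by metis
  qed
  have refl: "\<forall>a\<in>B. leB a a" using B L(2) ord by auto
  have ne: "B \<noteq> {}" using B L(1) by auto
  show ?thesis unfolding lattice_on_def using ne refl antis trans lub glb by blast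
qed

lemma oiso_fin:
  assumes "oiso A le B leB f" "fin_length_lattice A le"
  shows "fin_length_lattice B leB"
proof -
  have B: "B = f ` A" and ord: "\<forall>a\<in>A. \<forall>b\<in>A. leB (f a) (f b) \<longleftrightarrow> le a b"
    using assms(1) unfolding oiso_def bij_betw_def by auto
  have ch: "\<forall>C. C \<subseteq> A \<and> Complete_Partial_Order.chain le C \<longrightarrow> finite C"
    using assms(2) unfolding fin_length_lattice_def by auto
  have "finite C" if "C \<subseteq> B" "Complete_Partial_Order.chain leB C" for C
  proof -
    define D where "D = A \<inter> f -` C"
    have CD: "C = f ` D" unfolding D_def using that(1) B by auto
    have "Complete_Partial_Order.chain le D"
      using that(2) ord unfolding D_def chain_def by auto
    then have "finite D" using ch D_def by auto
    then show ?thesis using CD by auto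
  qed
  then show ?thesis using oiso_lattice[OF assms(1)] assms(2) unfolding fin_length_lattice_def by auto
qed

lemma oiso_filter:
  assumes "oiso A le B leB f" "lfilter A le F"
  shows "lfilter B leB (f ` F)"
proof -
  have B: "B = f ` A" and ord: "\<forall>a\<in>A. \<forall>b\<in>A. leB (f a) (f b) \<longleftrightarrow> le a b"
    using assms(1) unfolding oiso_def bij_betw_def by auto
  have F: "F \<subseteq> A" "F \<noteq> {}" "\<forall>a\<in>F. \<forall>b\<in>A. le a b \<longrightarrow> b \<in> F"
     "\<forall>a\<in>F. \<forall>b\<in>F. \<forall>c. is_glb A le a b c \<longrightarrow> c \<in> F"
    apply (insert assms(2)[unfolded lfilter_def])
    apply (elim conjE; assumption)+
    done
  have up: "\<forall>a\<in>f`F. \<forall>b\<in>B. leB a b \<longrightarrow> b \<in> f ` F"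
    unfolding B using F(1,3) ord by blast
  have gl: "c \<in> f ` F" if PQ: "P \<in> f`F" "Q \<in> f`F" "is_glb B leB P Q c" for P Q c
  proof -
    obtain a b where ab: "a\<in>F" "b\<in>F" "P = f a" "Q = f b" using PQ(1,2) by auto
    have "c \<in> B" using PQ(3) unfolding is_glb_def by auto
    then obtain c' where c': "c'\<in>A" "c = f c'" using B by auto
    have "is_glb A le a b c'" using oiso_glb[OF assms(1)] ab c' PQ(3) F(1) by blast
    then show ?thesis using F(4) ab c' by blast
  qed
  show ?thesis unfolding lfilter_def using F(1,2) B up gl by blast
qed

lemma oiso_ideal:
  assumes "oiso A le B leB f" "lideal A le F"
  shows "lideal B leB (f ` F)"
proof -
  have B: "B = f ` A" and ord: "\<forall>a\<in>A. \<forall>b\<in>A. leB (f a) (f b) \<longleftrightarrow> le a b"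
    using assms(1) unfolding oiso_def bij_betw_def by auto
  have F: "F \<subseteq> A" "F \<noteq> {}" "\<forall>a\<in>F. \<forall>b\<in>A. le b a \<longrightarrow> b \<in> F"
     "\<forall>a\<in>F. \<forall>b\<in>F. \<forall>c. is_lub A le a b c \<longrightarrow> c \<in> F"
    apply (insert assms(2)[unfolded lideal_def])
    apply (elim conjE; assumption)+
    done
  have up: "\<forall>a\<in>f`F. \<forall>b\<in>B. leB b a \<longrightarrow> b \<in> f ` F"
    unfolding B using F(1,3) ord by blast
  have gl: "c \<in> f ` F" if PQ: "P \<in> f`F" "Q \<in> f`F" "is_lub B leB P Q c" for P Q c
  proof -
    obtain a b where ab: "a\<in>F" "b\<in>F" "P = f a" "Q = f b" using PQ(1,2) by auto
    have "c \<in> B" using PQ(3) unfolding is_lub_def by auto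
    then obtain c' where c': "c'\<in>A" "c = f c'" using B by auto
    have "is_lub A le a b c'" using oiso_lub[OF assms(1)] ab c' PQ(3) F(1) by blast
    then show ?thesis using F(4) ab c' by blast
  qed
  show ?thesis unfolding lideal_def using F(1,2) B up gl by blast
qed

lemma iso_order:
  assumes "lattice_on A le" "lattice_on B leB" "lfilter A le D" "R \<subseteq> B"
    "lattice_iso_on A le B leB D R f" "a\<in>D" "a'\<in>D"
  shows "le a a' \<longleftrightarrow> leB (f a) (f a')"
proof -
  have DA: "D \<subseteq> A" and up: "\<forall>a\<in>D. \<forall>b\<in>A. le a b \<longrightarrow> b \<in> D"
    apply (insert assms(3)[unfolded lfilter_def])
    apply (elim conjE; assumption)+
    done
  have bij: "bij_betw f D R" and pl: "\<forall>a\<in>D. \<forall>b\<in>D. \<forall>c\<in>D. is_lub A le a b c \<longrightarrow> is_lub B leB (f a) (f b) (f c)"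
    apply (insert assms(5)[unfolded lattice_iso_on_def])
    apply (elim conjE; assumption)+
    done
  have LA: "\<forall>a\<in>A. le a a" "\<forall>a\<in>A. \<forall>b\<in>A. le a b \<and> le b a \<longrightarrow> a = b"
     "\<forall>a\<in>A. \<forall>b\<in>A. \<exists>c. is_lub A le a b c"
    apply (insert assms(1)[unfolded lattice_on_def])
    apply (elim conjE; assumption)+
    done
  have LB: "\<forall>a\<in>B. leB a a" "\<forall>a\<in>B. \<forall>b\<in>B. leB a b \<and> leB b a \<longrightarrow> a = b"
    apply (insert assms(2)[unfolded lattice_on_def])
    apply (elim conjE; assumption)+
    done
  have fR: "f a \<in> B" "f a' \<in> B" using bij assms(4,6,7) unfolding bij_betw_def by auto
  show ?thesis
  proof
    assume "le a a'"
    then have "is_lub A le a a' a'" unfolding is_lub_def using LA DA assms(6,7) by auto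
    then have "is_lub B leB (f a) (f a') (f a')" using pl assms(6,7) by blast
    then show "leB (f a) (f a')" unfolding is_lub_def by auto
  next
    assume h: "leB (f a) (f a')"
    obtain c where c: "is_lub A le a a' c" using LA(3) DA assms(6,7) by blast
    have cD: "c \<in> D" using c up assms(6) unfolding is_lub_def by auto
    have l1: "is_lub B leB (f a) (f a') (f c)" using pl c cD assms(6,7) by blast
    have l2: "is_lub B leB (f a) (f a') (f a')" unfolding is_lub_def using h fR LB by auto
    have "f c = f a'" using l1 l2 LB(2) unfolding is_lub_def by blast
    then have "c = a'" using bij cD assms(7) unfolding bij_betw_def inj_on_def by blast
    then show "le a a'" using c unfolding is_lub_def by auto
  qed
qed


locale csys =
  fixes L :: "'s::lattice \<Rightarrow> 'a set"
    and le :: "'s \<Rightarrow> 'a \<Rightarrow> 'a \<Rightarrow> bool"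
    and \<phi> :: "'s \<Rightarrow> 's \<Rightarrow> 'a \<rightharpoonup> 'a"
  assumes cs: "connected_system L le \<phi>"
    and disj: "\<forall>x y. x \<noteq> y \<longrightarrow> L x \<inter> L y = {}"
begin

abbreviation "R \<equiv> simrel L \<phi>"
abbreviation "pi \<equiv> proj (simrel L \<phi>)"

lemmas CS = cs[unfolded connected_system_def]
lemmas c1 = CS[THEN conjunct1]
lemmas c2 = CS[THEN conjunct2, THEN conjunct1]
lemmas c3 = CS[THEN conjunct2, THEN conjunct2, THEN conjunct1]
lemmas c4 = CS[THEN conjunct2, THEN conjunct2, THEN conjunct2, THEN conjunct1]
lemmas c5 = CS[THEN conjunct2, THEN conjunct2, THEN conjunct2, THEN conjunct2, THEN conjunct1]
lemmas c6 = CS[THEN conjunct2, THEN conjunct2, THEN conjunct2, THEN conjunct2, THEN conjunct2, THEN conjunct1]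
lemmas c7 = CS[THEN conjunct2, THEN conjunct2, THEN conjunct2, THEN conjunct2, THEN conjunct2, THEN conjunct2, THEN conjunct1]
lemmas c8 = CS[THEN conjunct2, THEN conjunct2, THEN conjunct2, THEN conjunct2, THEN conjunct2, THEN conjunct2, THEN conjunct2]

lemma fin: "fin_length_lattice (L x) (le x)"
  using c1 by blast
lemma lat: "lattice_on (L x) (le x)"
  using fin unfolding fin_length_lattice_def by auto
lemma dom_sub: "x \<le> y \<Longrightarrow> dom (\<phi> y x) \<subseteq> L x"
  using c2 by blast
lemma ran_sub: "x \<le> y \<Longrightarrow> ran (\<phi> y x) \<subseteq> L y"
  using c2 by blast
lemma injd: "x \<le> y \<Longrightarrow> inj_on (\<phi> y x) (dom (\<phi> y x))"
  using c2 by blast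
lemma isos: "x \<le> y \<Longrightarrow> dom (\<phi> y x) \<noteq> {} \<Longrightarrow>
        lfilter (L x) (le x) (dom (\<phi> y x)) \<and> lideal (L y) (le y) (ran (\<phi> y x))
        \<and> lattice_iso_on (L x) (le x) (L y) (le y) (dom (\<phi> y x)) (ran (\<phi> y x))
             (\<lambda>a. the (\<phi> y x a))"
  using c3 by blast
lemma idm: "\<phi> x x a = (if a \<in> L x then Some a else None)"
  using c4 by blast
lemma cov: "x \<prec> y \<Longrightarrow> dom (\<phi> y x) \<noteq> {}"
  using c5 by blast
lemma comp: "x \<le> z \<Longrightarrow> z \<le> y \<Longrightarrow> \<phi> y x = \<phi> y z \<circ>\<^sub>m \<phi> z x"
  using c6 by blast
lemma c20: "ran (\<phi> (sup x y) x) \<inter> ran (\<phi> (sup x y) y) \<subseteq> ran (\<phi> (sup x y) (inf x y))"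
  using c7 by blast
lemma c20d: "dom (\<phi> x (inf x y)) \<inter> dom (\<phi> y (inf x y)) \<subseteq> dom (\<phi> (sup x y) (inf x y))"
  using c8 by blast

lemma comp_app: "x \<le> z \<Longrightarrow> z \<le> y \<Longrightarrow> \<phi> y x a = Some c \<Longrightarrow> \<exists>d. \<phi> z x a = Some d \<and> \<phi> y z d = Some c"
  using comp[of x z y] by (simp add: map_comp_Some_iff)
lemma comp_some: "x \<le> z \<Longrightarrow> z \<le> y \<Longrightarrow> \<phi> z x a = Some d \<Longrightarrow> \<phi> y z d = Some c \<Longrightarrow> \<phi> y x a = Some c"
  using comp[of x z y] by (simp add: map_comp_Some_iff)
lemma inj_app: "x \<le> y \<Longrightarrow> \<phi> y x a = Some c \<Longrightarrow> \<phi> y x a' = Some c \<Longrightarrow> a = a'"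
  using injd[of x y] unfolding inj_on_def by (metis domI)
lemma app_in: "x \<le> y \<Longrightarrow> \<phi> y x a = Some c \<Longrightarrow> a \<in> L x \<and> c \<in> L y"
  using dom_sub[of x y] ran_sub[of x y] by (auto intro: ranI)

lemma uniqL: "a \<in> L x \<Longrightarrow> a \<in> L x' \<Longrightarrow> x = x'"
  using disj by blast

lemma simI:
  assumes "a \<in> L x" "b \<in> L y" "sup x y \<le> z" "\<phi> z x a = Some c" "\<phi> z y b = Some c"
  shows "(a,b) \<in> R"
proof -
  have "\<exists>z. sup x y \<le> z \<and> a \<in> dom (\<phi> z x) \<and> b \<in> dom (\<phi> z y) \<and> \<phi> z x a = \<phi> z y b"
    using assms(3-5) by (intro exI[of _ z]) auto
  then have "\<exists>x y. a \<in> L x \<and> b \<in> L y \<and> (\<exists>z. sup x y \<le> z \<and> a \<in> dom (\<phi> z x) \<and> b \<in> dom (\<phi> z y) \<and> \<phi> z x a = \<phi> z y b)"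
    using assms(1,2) by blast
  then show ?thesis unfolding simrel_def by simp
qed

lemma sim_iff:
  assumes "a \<in> L x" "b \<in> L y"
  shows "(a,b) \<in> R \<longleftrightarrow> (\<exists>c. \<phi> (sup x y) x a = Some c \<and> \<phi> (sup x y) y b = Some c)"
proof
  assume "(a,b) \<in> R"
  then obtain x' y' z where h: "a \<in> L x'" "b \<in> L y'" "sup x' y' \<le> z" "a \<in> dom (\<phi> z x')"
     "b \<in> dom (\<phi> z y')" "\<phi> z x' a = \<phi> z y' b"
    unfolding simrel_def by blast
  have "x' = x" "y' = y" using uniqL h(1,2) assms by auto
  with h obtain e where e: "\<phi> z x a = Some e" "\<phi> z y b = Some e" by auto
  obtain d where d: "\<phi> (sup x y) x a = Some d" "\<phi> z (sup x y) d = Some e"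
    using comp_app[OF _ _ e(1), of "sup x y"] h(3) \<open>x'=x\<close> \<open>y'=y\<close> by auto
  obtain d' where d': "\<phi> (sup x y) y b = Some d'" "\<phi> z (sup x y) d' = Some e"
    using comp_app[OF _ _ e(2), of "sup x y"] h(3) \<open>x'=x\<close> \<open>y'=y\<close> by auto
  have "d = d'" using inj_app[OF _ d(2) d'(2)] h(3) \<open>x'=x\<close> \<open>y'=y\<close> by auto
  then show "\<exists>c. \<phi> (sup x y) x a = Some c \<and> \<phi> (sup x y) y b = Some c" using d d' by auto
next
  assume "\<exists>c. \<phi> (sup x y) x a = Some c \<and> \<phi> (sup x y) y b = Some c"
  then obtain c where "\<phi> (sup x y) x a = Some c" "\<phi> (sup x y) y b = Some c" by blast
  then show "(a,b) \<in> R" using simI[OF assms] by blast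
qed

lemma sim_le:
  assumes "x \<le> y" "a \<in> L x" "b \<in> L y"
  shows "(a,b) \<in> R \<longleftrightarrow> \<phi> y x a = Some b"
  using sim_iff[OF assms(2,3)] assms(1) idm[of y b] assms(3) by (simp add: sup_absorb2)

lemma simR_sub: "(a,b) \<in> R \<Longrightarrow> a \<in> (\<Union>x. L x) \<and> b \<in> (\<Union>x. L x)"
  unfolding simrel_def by blast

lemma equivR: "equiv (\<Union>x. L x) R"
proof (rule equivI)
  show "R \<subseteq> (\<Union>x. L x) \<times> (\<Union>x. L x)" using simR_sub by auto
next
  show "refl_on (\<Union>x. L x) R"
  proof (rule refl_onI)
    fix a assume "a \<in> (\<Union>x. L x)"
    then obtain x where "a \<in> L x" by auto
    then show "(a,a) \<in> R" using sim_le[of x x a a] idm by auto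
  qed
next
  show "sym R"
  proof (rule symI)
    fix a b assume ab: "(a,b) \<in> R"
    obtain x y where x: "a \<in> L x" "b \<in> L y" using simR_sub[OF ab] by auto
    then obtain c where c: "\<phi> (sup x y) x a = Some c" "\<phi> (sup x y) y b = Some c"
      using sim_iff ab by blast
    have "sup y x \<le> sup x y" by (simp add: sup_commute)
    then show "(b,a) \<in> R" using simI[OF x(2) x(1) _ c(2) c(1)] by blast
  qed
next
  show "trans R"
  proof (rule transI)
    fix a b c assume ab: "(a,b) \<in> R" and bc: "(b,c) \<in> R"
    obtain x where x: "a \<in> L x" using simR_sub[OF ab] by auto
    obtain y where y: "b \<in> L y" using simR_sub[OF ab] by auto
    obtain w where w: "c \<in> L w" using simR_sub[OF bc] by auto
    define s1 where "s1 = sup x y"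
    define s2 where "s2 = sup y w"
    define m where "m = inf s1 s2"
    define t where "t = sup s1 s2"
    obtain p where p: "\<phi> s1 x a = Some p" "\<phi> s1 y b = Some p"
      using sim_iff[OF x y] ab s1_def by auto
    obtain q where q: "\<phi> s2 y b = Some q" "\<phi> s2 w c = Some q"
      using sim_iff[OF y w] bc s2_def by auto
    have ym: "y \<le> m" unfolding m_def s1_def s2_def by simp
    have ms1: "m \<le> s1" "m \<le> s2" unfolding m_def by auto
    obtain e where e: "\<phi> m y b = Some e" "\<phi> s1 m e = Some p"
      using comp_app[OF ym ms1(1) p(2)] by auto
    obtain e' where e': "\<phi> m y b = Some e'" "\<phi> s2 m e' = Some q"
      using comp_app[OF ym ms1(2) q(1)] by auto
    have "e = e'" using e e' by auto
    then have "e \<in> dom (\<phi> s1 (inf s1 s2)) \<inter> dom (\<phi> s2 (inf s1 s2))"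
      using e(2) e'(2) m_def by auto
    then obtain r where r: "\<phi> t m e = Some r" using c20d[of s1 s2] m_def t_def by auto
    have mt: "m \<le> t" unfolding m_def t_def by (meson inf_le1 order_trans sup_ge1)
    have s1t: "s1 \<le> t" "s2 \<le> t" unfolding t_def by auto
    have tyb: "\<phi> t y b = Some r" using comp_some[OF ym mt e(1) r] .
    obtain p' where p': "\<phi> s1 y b = Some p'" "\<phi> t s1 p' = Some r"
      using comp_app[OF _ s1t(1) tyb] s1_def by auto
    obtain q' where q': "\<phi> s2 y b = Some q'" "\<phi> t s2 q' = Some r"
      using comp_app[OF _ s1t(2) tyb] s2_def by auto
    have "\<phi> t x a = Some r" using comp_some[OF _ s1t(1) p(1)] p p' s1_def by auto
    moreover have "\<phi> t w c = Some r" using comp_some[OF _ s1t(2) q(2)] q q' s2_def by auto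
    moreover have "sup x w \<le> t" unfolding t_def s1_def s2_def
      by (meson le_sup_iff sup_ge1 sup_ge2 order_trans)
    ultimately show "(a,c) \<in> R" using simI[OF x w] by blast
  qed
qed

lemma pi_eq: "a \<in> L x \<Longrightarrow> b \<in> L y \<Longrightarrow> pi a = pi b \<longleftrightarrow> (a,b) \<in> R"
  using equiv_class_eq_iff[OF equivR, of a b] unfolding proj_def by auto

lemma pi_inj: "inj_on pi (L x)"
  unfolding inj_on_def using pi_eq sim_le[of x x] idm by auto

lemma oisoL: "oiso (L x) (le x) (Lpi L \<phi> x) (lepi L le \<phi> x) pi"
  unfolding oiso_def bij_betw_def Lpi_def lepi_def using pi_inj[of x]
  unfolding inj_on_def by blast

lemma finpi: "fin_length_lattice (Lpi L \<phi> x) (lepi L le \<phi> x)"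
  using oiso_fin[OF oisoL fin] .

lemma int_dom: "x \<le> y \<Longrightarrow> Lpi L \<phi> x \<inter> Lpi L \<phi> y = pi ` dom (\<phi> y x)"
proof
  assume xy: "x \<le> y"
  show "Lpi L \<phi> x \<inter> Lpi L \<phi> y \<subseteq> pi ` dom (\<phi> y x)"
  proof
    fix P assume "P \<in> Lpi L \<phi> x \<inter> Lpi L \<phi> y"
    then obtain a b where "a \<in> L x" "b \<in> L y" "P = pi a" "P = pi b" unfolding Lpi_def by auto
    then show "P \<in> pi ` dom (\<phi> y x)" using pi_eq sim_le xy by blast
  qed
next
  assume xy: "x \<le> y"
  show "pi ` dom (\<phi> y x) \<subseteq> Lpi L \<phi> x \<inter> Lpi L \<phi> y"
  proof
    fix P assume "P \<in> pi ` dom (\<phi> y x)"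
    then obtain a b where ab: "\<phi> y x a = Some b" "P = pi a" by auto
    have "a \<in> L x" "b \<in> L y" using app_in[OF xy ab(1)] by auto
    then have "pi a = pi b" using pi_eq sim_le xy ab(1) by blast
    then show "P \<in> Lpi L \<phi> x \<inter> Lpi L \<phi> y" using ab \<open>a \<in> L x\<close> \<open>b \<in> L y\<close> unfolding Lpi_def by auto
  qed
qed

lemma int_ran: "x \<le> y \<Longrightarrow> Lpi L \<phi> x \<inter> Lpi L \<phi> y = pi ` ran (\<phi> y x)"
proof
  assume xy: "x \<le> y"
  show "Lpi L \<phi> x \<inter> Lpi L \<phi> y \<subseteq> pi ` ran (\<phi> y x)"
  proof
    fix P assume "P \<in> Lpi L \<phi> x \<inter> Lpi L \<phi> y"
    then obtain a b where "a \<in> L x" "b \<in> L y" "P = pi a" "P = pi b" unfolding Lpi_def by auto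
    then show "P \<in> pi ` ran (\<phi> y x)" using pi_eq sim_le xy by (blast intro: ranI)
  qed
next
  assume xy: "x \<le> y"
  show "pi ` ran (\<phi> y x) \<subseteq> Lpi L \<phi> x \<inter> Lpi L \<phi> y"
  proof
    fix P assume "P \<in> pi ` ran (\<phi> y x)"
    then obtain a b where ab: "\<phi> y x a = Some b" "P = pi b" by (auto simp: ran_def)
    have "a \<in> L x" "b \<in> L y" using app_in[OF xy ab(1)] by auto
    then have "pi a = pi b" using pi_eq sim_le xy ab(1) by blast
    then show "P \<in> Lpi L \<phi> x \<inter> Lpi L \<phi> y" using ab \<open>a \<in> L x\<close> \<open>b \<in> L y\<close> unfolding Lpi_def by auto
  qed
qed

lemma lepi_iff: "a \<in> L x \<Longrightarrow> b \<in> L x \<Longrightarrow> lepi L le \<phi> x (pi a) (pi b) \<longleftrightarrow> le x a b"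
  using oisoL[of x] unfolding oiso_def by auto

lemma pi_phi: "x \<le> y \<Longrightarrow> \<phi> y x a = Some b \<Longrightarrow> pi a = pi b"
proof -
  assume xy: "x \<le> y" and ab: "\<phi> y x a = Some b"
  have inL: "a \<in> L x" "b \<in> L y" using app_in[OF xy ab] by auto
  have "(a,b) \<in> R" using sim_le[OF xy inL] ab by simp
  then show ?thesis using pi_eq[OF inL] by simp
qed

lemma glued: "glued_system (Lpi L \<phi>) (lepi L le \<phi>)"
  unfolding glued_system_def
proof (intro conjI allI impI)
  fix x show "fin_length_lattice (Lpi L \<phi> x) (lepi L le \<phi> x)" by (rule finpi)
next
  fix x y :: 's assume h: "x \<le> y \<and> Lpi L \<phi> x \<inter> Lpi L \<phi> y \<noteq> {}"
  then have xy: "x \<le> y" by blast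
  have eqd: "Lpi L \<phi> x \<inter> Lpi L \<phi> y = pi ` dom (\<phi> y x)" using int_dom[OF xy] .
  have eqr: "Lpi L \<phi> x \<inter> Lpi L \<phi> y = pi ` ran (\<phi> y x)" using int_ran[OF xy] .
  have ne: "dom (\<phi> y x) \<noteq> {}" using h eqd by auto
  have I: "lfilter (L x) (le x) (dom (\<phi> y x))" "lideal (L y) (le y) (ran (\<phi> y x))"
    using isos[OF xy ne] by blast+
  show "lfilter (Lpi L \<phi> x) (lepi L le \<phi> x) (Lpi L \<phi> x \<inter> Lpi L \<phi> y)"
    unfolding eqd by (rule oiso_filter[OF oisoL I(1)])
  show "lideal (Lpi L \<phi> y) (lepi L le \<phi> y) (Lpi L \<phi> x \<inter> Lpi L \<phi> y)"
    unfolding eqr by (rule oiso_ideal[OF oisoL I(2)])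
next
  fix x y :: 's assume h: "x \<le> y \<and> Lpi L \<phi> x \<inter> Lpi L \<phi> y \<noteq> {}"
  then have xy: "x \<le> y" by blast
  have eqd: "Lpi L \<phi> x \<inter> Lpi L \<phi> y = pi ` dom (\<phi> y x)" using int_dom[OF xy] .
  have ne: "dom (\<phi> y x) \<noteq> {}" using h eqd by auto
  have I1: "lfilter (L x) (le x) (dom (\<phi> y x))"
   and I2: "lattice_iso_on (L x) (le x) (L y) (le y) (dom (\<phi> y x)) (ran (\<phi> y x)) (\<lambda>a. the (\<phi> y x a))"
    using isos[OF xy ne] by blast+
  show "\<forall>P\<in>Lpi L \<phi> x \<inter> Lpi L \<phi> y. \<forall>Q\<in>Lpi L \<phi> x \<inter> Lpi L \<phi> y.
           lepi L le \<phi> x P Q = lepi L le \<phi> y P Q"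
  proof (intro ballI)
    fix P Q assume PQ: "P \<in> Lpi L \<phi> x \<inter> Lpi L \<phi> y" "Q \<in> Lpi L \<phi> x \<inter> Lpi L \<phi> y"
    obtain a where a: "a \<in> dom (\<phi> y x)" "P = pi a" using PQ(1) eqd by auto
    obtain a' where a': "a' \<in> dom (\<phi> y x)" "Q = pi a'" using PQ(2) eqd by auto
    obtain b where b: "\<phi> y x a = Some b" using a(1) by auto
    obtain b' where b': "\<phi> y x a' = Some b'" using a'(1) by auto
    have inL: "a \<in> L x" "b \<in> L y" using app_in[OF xy b] by auto
    have inL': "a' \<in> L x" "b' \<in> L y" using app_in[OF xy b'] by auto
    have e1: "pi a = pi b" using pi_phi[OF xy b] .
    have e2: "pi a' = pi b'" using pi_phi[OF xy b'] .
    have "le x a a' \<longleftrightarrow> le y ((\<lambda>a. the (\<phi> y x a)) a) ((\<lambda>a. the (\<phi> y x a)) a')"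
      by (rule iso_order[OF lat lat I1 ran_sub[OF xy] I2 a(1) a'(1)])
    then have 1: "le x a a' \<longleftrightarrow> le y b b'" using b b' by simp
    have 2: "lepi L le \<phi> x (pi a) (pi a') \<longleftrightarrow> le x a a'" by (rule lepi_iff[OF inL(1) inL'(1)])
    have 3: "lepi L le \<phi> y (pi b) (pi b') \<longleftrightarrow> le y b b'" by (rule lepi_iff[OF inL(2) inL'(2)])
    show "lepi L le \<phi> x P Q = lepi L le \<phi> y P Q"
      unfolding a(2) a'(2) using 1 2 3 e1 e2 by simp
  qed
next
  fix x y :: 's assume "x \<prec> y"
  then have xy: "x \<le> y" and ne: "dom (\<phi> y x) \<noteq> {}" using cov unfolding covers_def by auto
  show "Lpi L \<phi> x \<inter> Lpi L \<phi> y \<noteq> {}" unfolding int_dom[OF xy] using ne by simp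
next
  fix x y :: 's
  show "Lpi L \<phi> x \<inter> Lpi L \<phi> y \<subseteq> Lpi L \<phi> (inf x y) \<inter> Lpi L \<phi> (sup x y)"
  proof
    fix P assume "P \<in> Lpi L \<phi> x \<inter> Lpi L \<phi> y"
    then obtain a b where ab: "a \<in> L x" "b \<in> L y" "P = pi a" "P = pi b" unfolding Lpi_def by auto
    have "(a,b) \<in> R" using pi_eq[OF ab(1,2)] ab(3,4) by simp
    then obtain c where c: "\<phi> (sup x y) x a = Some c" "\<phi> (sup x y) y b = Some c"
      using sim_iff[OF ab(1,2)] by blast
    have "c \<in> ran (\<phi> (sup x y) x) \<inter> ran (\<phi> (sup x y) y)" using c by (auto intro: ranI)
    then have "c \<in> ran (\<phi> (sup x y) (inf x y))" using c20[of x y] by blast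
    then obtain e where e: "\<phi> (sup x y) (inf x y) e = Some c" by (auto simp: ran_def)
    have mx: "inf x y \<le> sup x y" by (meson inf_le1 order_trans sup_ge1)
    have inL: "e \<in> L (inf x y)" "c \<in> L (sup x y)" using app_in[OF mx e] by auto
    have "pi e = pi c" by (rule pi_phi[OF mx e])
    moreover have "pi a = pi c" by (rule pi_phi[OF _ c(1)]) simp
    ultimately show "P \<in> Lpi L \<phi> (inf x y) \<inter> Lpi L \<phi> (sup x y)"
      using ab inL unfolding Lpi_def by auto
  qed
qed

lemma mono_iff: "monotone_glued (Lpi L \<phi>) \<longleftrightarrow>
         (\<forall>x y. x \<prec> y \<longrightarrow> ran (\<phi> y x) \<noteq> L y \<and> dom (\<phi> y x) \<noteq> L x)"
proof -
  have A: "Lpi L \<phi> y \<subseteq> Lpi L \<phi> x \<longleftrightarrow> ran (\<phi> y x) = L y" if xy: "x \<le> y" for x y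
  proof -
    have "Lpi L \<phi> y \<subseteq> Lpi L \<phi> x \<longleftrightarrow> Lpi L \<phi> x \<inter> Lpi L \<phi> y = Lpi L \<phi> y" by auto
    also have "\<dots> \<longleftrightarrow> pi ` ran (\<phi> y x) = pi ` L y" using int_ran[OF xy] unfolding Lpi_def by simp
    also have "\<dots> \<longleftrightarrow> ran (\<phi> y x) = L y"
      using inj_on_image_eq_iff[OF pi_inj ran_sub[OF xy]] by simp
    finally show ?thesis .
  qed
  have B: "Lpi L \<phi> x \<subseteq> Lpi L \<phi> y \<longleftrightarrow> dom (\<phi> y x) = L x" if xy: "x \<le> y" for x y
  proof -
    have "Lpi L \<phi> x \<subseteq> Lpi L \<phi> y \<longleftrightarrow> Lpi L \<phi> x \<inter> Lpi L \<phi> y = Lpi L \<phi> x" by auto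
    also have "\<dots> \<longleftrightarrow> pi ` dom (\<phi> y x) = pi ` L x" using int_dom[OF xy] unfolding Lpi_def by simp
    also have "\<dots> \<longleftrightarrow> dom (\<phi> y x) = L x"
      using inj_on_image_eq_iff[OF pi_inj dom_sub[OF xy]] by simp
    finally show ?thesis .
  qed
  show ?thesis unfolding monotone_glued_def using A B unfolding covers_def by (meson less_imp_le)
qed

end

theorem theorem4p2:
  fixes L :: "'s::lattice \<Rightarrow> 'a set"
    and le :: "'s \<Rightarrow> 'a \<Rightarrow> 'a \<Rightarrow> bool"
    and \<phi> :: "'s \<Rightarrow> 's \<Rightarrow> 'a \<rightharpoonup> 'a"
  assumes "finite_length_type TYPE('s)"
    and "connected_system L le \<phi>"
    and "\<forall>x y. x \<noteq> y \<longrightarrow> L x \<inter> L y = {}"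
  shows "equiv (\<Union>x. L x) (simrel L \<phi>)
    \<and> (\<forall>x. inj_on (proj (simrel L \<phi>)) (L x))
    \<and> glued_system (Lpi L \<phi>) (lepi L le \<phi>)
    \<and> (monotone_glued (Lpi L \<phi>) \<longleftrightarrow>
         (\<forall>x y. x \<prec> y \<longrightarrow> ran (\<phi> y x) \<noteq> L y \<and> dom (\<phi> y x) \<noteq> L x))"
proof -
  interpret csys L le \<phi> using assms(2,3) by unfold_locales
  show ?thesis using equivR pi_inj glued mono_iff by blast
qed

end
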